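(* Let $\lambda>0$, let ${\mathbf{C}}_{\min}\le{\mathbf{C}}_{\max}$ be real symmetric $d\times d$ matrices and ${\mathbf{b}}_{\min}\le{\mathbf{b}}_{\max}$ vectors in $\mathbb{R}^d$. For fixed ${\boldsymbol{\theta}}\in\mathbb{R}^d$, the inner maximization problem $$\max_{{\mathbf{C}},{\mathbf{b}}}\ {\boldsymbol{\theta}}^T{\mathbf{C}}{\boldsymbol{\theta}}-2{\mathbf{b}}^T{\boldsymbol{\theta}}+\lambda\|{\boldsymbol{\theta}}\|_2^2\quad\text{s.t.}\quad {\mathbf{C}}_{\min}\le{\mathbf{C}}\le{\mathbf{C}}_{\max},\ {\mathbf{b}}_{\min}\le{\mathbf{b}}\le{\mathbf{b}}_{\max},\ {\mathbf{C}}\succeq0$$ can be equivalently formulated as $$\min_{{\mathbf{A}},{\mathbf{B}},{\mathbf{d}},{\mathbf{e}},{\mathbf{H}}}\ -\langle{\mathbf{b}}_{\min},{\mathbf{d}}\rangle+\langle{\mathbf{b}}_{\max},{\mathbf{e}}\rangle-\langle{\mathbf{C}}_{\min},{\mathbf{A}}\rangle+\langle{\mathbf{C}}_{\max},{\mathbf{B}}\rangle+\lambda\|{\boldsymbol{\theta}}\|^2$$ $$\text{s.t.}\quad -{\boldsymbol{\theta}}{\boldsymbol{\theta}}^T-{\mathbf{A}}+{\mathbf{B}}-{\mathbf{H}}=0,\quad 2{\boldsymbol{\theta}}-{\mathbf{d}}+{\mathbf{e}}=0,\quad {\mathbf{A}},{\mathbf{B}},{\mathbf{d}},{\mathbf{e}}\ge0,\quad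 {\mathbf{H}}\succeq0.$$ Therefore the min-max problem $\min_{{\boldsymbol{\theta}}}\max_{{\mathbf{C}},{\mathbf{b}}}$ of the first objective over the first constraint set can be alternatively written as the single minimization of the second objective over ${\boldsymbol{\theta}},{\mathbf{A}},{\mathbf{B}},{\mathbf{d}},{\mathbf{e}},{\mathbf{H}}$ subject to the same constraints.
   Context: Matrix and vector inequalities ($\le$, $\ge0$) are entrywise; $\succeq$ is the positive semidefinite order; $\langle\cdot,\cdot\rangle$ is the Euclidean/Frobenius inner product. ${\mathbf{A}},{\mathbf{B}},{\mathbf{H}}$ range over $d\times d$ matrices and ${\mathbf{d}},{\mathbf{e}}$ over $\mathbb{R}^d$. In the paper ${\mathbf{C}}_{\min}={\mathbf{C}}_0-c\boldsymbol{\Delta}$, ${\mathbf{C}}_{\max}={\mathbf{C}}_0+c\boldsymbol{\Delta}$, ${\mathbf{b}}_{\min}={\mathbf{b}}_0-c\boldsymbol{\delta}$, ${\mathbf{b}}_{\max}={\mathbf{b}}_0+c\boldsymbol{\delta}$ are confidence bounds for the second moments ${\mathbf{X}}^T{\mathbf{X}}$, ${\mathbf{X}}^T{\mathbf{y}}$ of a data set with missing entries. *)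

theory Defs
  imports "HOL-Analysis.Analysis"
begin

definition psd :: "real^'n^'n \<Rightarrow> bool" where
  "psd M \<longleftrightarrow> transpose M = M \<and> (\<forall>x. 0 \<le> x \<bullet> (M *v x))"

definition outer :: "real^'n \<Rightarrow> real^'n^'n" where
  "outer v = (\<chi> i j. v $ i * v $ j)"

definition primal_obj :: "real \<Rightarrow> real^'n \<Rightarrow> real^'n^'n \<Rightarrow> real^'n \<Rightarrow> real" where
  "primal_obj lam th C b = th \<bullet> (C *v th) - 2 * (b \<bullet> th) + lam * (norm th)^2"

definition primal_feas ::
  "real^'n^'n \<Rightarrow> real^'n^'n \<Rightarrow> real^'n \<Rightarrow> real^'n \<Rightarrow> ((real^'n^'n) \<times> (real^'n)) set" where
  "primal_feas Cmin Cmax bmin bmax =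
     {(C, b). Cmin \<le> C \<and> C \<le> Cmax \<and> bmin \<le> b \<and> b \<le> bmax \<and> psd C}"

definition dual_obj ::
  "real \<Rightarrow> real^'n^'n \<Rightarrow> real^'n^'n \<Rightarrow> real^'n \<Rightarrow> real^'n \<Rightarrow> real^'n
   \<Rightarrow> real^'n^'n \<Rightarrow> real^'n^'n \<Rightarrow> real^'n \<Rightarrow> real^'n \<Rightarrow> real" where
  "dual_obj lam Cmin Cmax bmin bmax th A B d e =
     - (bmin \<bullet> d) + bmax \<bullet> e - Cmin \<bullet> A + Cmax \<bullet> B + lam * (norm th)^2"

definition dual_feas ::
  "real^'n \<Rightarrow> real^'n^'n \<Rightarrow> real^'n^'n \<Rightarrow> real^'n \<Rightarrow> real^'n \<Rightarrow> real^'n^'n \<Rightarrow> bool" where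
  "dual_feas th A B d e H \<longleftrightarrow>
     - outer th - A + B - H = 0 \<and> 2 *\<^sub>R th - d + e = 0 \<and>
     0 \<le> A \<and> 0 \<le> B \<and> 0 \<le> d \<and> 0 \<le> e \<and> psd H"

end

theory Submission
  imports Defs
begin


lemma inner_mat: "(M::real^'n^'n) \<bullet> N = (\<Sum>i\<in>UNIV. \<Sum>j\<in>UNIV. M$i$j * N$i$j)"
  by (simp add: inner_vec_def)

lemma quad_form: "(x::real^'n) \<bullet> (M *v y) = (\<Sum>i\<in>UNIV. \<Sum>j\<in>UNIV. x$i * M$i$j * y$j)"
  by (simp add: inner_vec_def matrix_vector_mult_def sum_distrib_left mult.assoc)

lemma outer_inner: "(M::real^'n^'n) \<bullet> outer v = v \<bullet> (M *v v)"
  unfolding inner_mat quad_form outer_def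
  by (simp add: algebra_simps)

lemma sym_entry: "transpose M = M \<Longrightarrow> M$i$j = M$j$i"
  by (metis transpose_def vec_lambda_beta)

lemma transpose_outer: "transpose (outer v) = outer v"
  by (simp add: transpose_def outer_def vec_eq_iff mult.commute)

lemma outer_quad: "x \<bullet> (outer v *v x) = (v \<bullet> x)^2"
  unfolding quad_form outer_def
  by (simp add: power2_eq_square inner_vec_def sum_product algebra_simps)

lemma psd_outer: "psd (outer v)"
  unfolding psd_def by (simp add: transpose_outer outer_quad)

lemma quad_swap: "transpose H = H \<Longrightarrow> (x::real^'n) \<bullet> (H *v y) = y \<bullet> (H *v x)"
  unfolding quad_form
  apply (subst sum.swap)
  apply (intro sum.cong refl)
  by (simp add: sym_entry[of H] mult.commute mult.left_commute)

lemma q_expand: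
  assumes "transpose H = H"
  shows "(x + t *\<^sub>R y) \<bullet> (H *v (x + t *\<^sub>R y)) =
     x \<bullet> (H *v x) + 2 * t * (y \<bullet> (H *v x)) + t^2 * (y \<bullet> (H *v (y::real^'n)))"
  using quad_swap[OF assms, of x y]
  by (simp add: matrix_vector_right_distrib matrix_vector_mult_scaleR algebra_simps
      power2_eq_square inner_add_left inner_add_right)

lemma axis_Hx: "axis i 1 \<bullet> ((H::real^'n^'n) *v x) = H$i \<bullet> x"
proof -
  have "axis i 1 \<bullet> (H *v x) = (H *v x)$i" by (simp add: inner_axis')
  also have "\<dots> = H$i \<bullet> x" by (simp add: matrix_vector_mult_def inner_vec_def)
  finally show ?thesis .
qed

lemma axis_quad: "axis i 1 \<bullet> ((H::real^'n^'n) *v axis j 1) = H$i$j"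
  by (simp add: axis_Hx inner_axis)

lemma psd_diag: "psd H \<Longrightarrow> 0 \<le> H$i$i"
  unfolding psd_def using axis_quad[of i H i] by metis

lemma psd_row_zero:
  assumes "psd H" "H$i$i = 0"
  shows "H$i$j = 0"
proof (rule ccontr)
  assume ne: "H$i$j \<noteq> 0"
  have sym: "transpose H = H" using assms(1) psd_def by blast
  define t where "t = - (H$j$j + 1) / (2 * H$i$j)"
  have "0 \<le> (axis j 1 + t *\<^sub>R axis i 1) \<bullet> (H *v (axis j 1 + t *\<^sub>R axis i 1))"
    using assms(1) psd_def by blast
  also have "\<dots> = H$j$j + 2 * t * H$i$j + t^2 * H$i$i"
    by (simp add: q_expand[OF sym] axis_quad)
  also have "\<dots> = -1" using ne assms(2) by (simp add: t_def field_simps)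
  finally show False by simp
qed

lemma psd_inner_aux:
  fixes C :: "real^'n^'n" and I :: "'n set"
  assumes C: "psd C" and fin: "finite I"
  shows "\<forall>H. psd H \<and> (\<forall>k j. k \<notin> I \<longrightarrow> H$k$j = 0) \<longrightarrow> 0 \<le> C \<bullet> H"
  using fin
proof induct
  case empty
  show ?case
  proof (intro allI impI)
    fix H :: "real^'n^'n" assume "psd H \<and> (\<forall>k j. k \<notin> {} \<longrightarrow> H$k$j = 0)"
    then have "H = 0" by (simp add: vec_eq_iff)
    then show "0 \<le> C \<bullet> H" by simp
  qed
next
  case (insert i I)
  show ?case
  proof (intro allI impI)
    fix H :: "real^'n^'n" assume HH: "psd H \<and> (\<forall>k j. k \<notin> insert i I \<longrightarrow> H$k$j = 0)"
    have psdH: "psd H" using HH by blast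
    have sym: "transpose H = H" using psdH psd_def by blast
    show "0 \<le> C \<bullet> H"
    proof (cases "H$i$i = 0")
      case True
      then have "\<forall>k j. k \<notin> I \<longrightarrow> H$k$j = 0"
        using HH psd_row_zero[OF psdH True] by (metis insert_iff)
      then show ?thesis using insert(3) psdH by blast
    next
      case False
      define c where "c = H$i$i"
      have cpos: "c > 0" using False psd_diag[OF psdH, of i] c_def by linarith
      define h where "h = H$i"
      define H' where "H' = H - (1/c) *\<^sub>R outer h"
      have symH': "transpose H' = H'"
        unfolding H'_def h_def outer_def
        by (simp add: vec_eq_iff transpose_def sym_entry[OF sym] mult.commute)
      have quadH': "x \<bullet> (H' *v x) = x \<bullet> (H *v x) - (h \<bullet> x)^2 / c" for x
        unfolding H'_def
        by (simp add: matrix_vector_mult_diff_rdistrib outer_quad inner_diff_right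
              scaleR_matrix_vector_assoc[symmetric])
      have "0 \<le> x \<bullet> (H' *v x)" for x
      proof -
        define z where "z = x + (- (h \<bullet> x) / c) *\<^sub>R axis i 1"
        have "0 \<le> z \<bullet> (H *v z)" using psdH psd_def by blast
        also have "\<dots> = x \<bullet> (H *v x) + 2 * (- (h \<bullet> x) / c) * (h \<bullet> x)
             + (- (h \<bullet> x) / c)^2 * c"
          unfolding z_def q_expand[OF sym] by (simp add: axis_quad axis_Hx h_def c_def inner_axis)
        also have "\<dots> = x \<bullet> (H' *v x)" using cpos
          by (simp add: quadH' field_simps power2_eq_square)
        finally show ?thesis .
      qed
      then have psdH': "psd H'" using symH' psd_def by blast
      have zero': "\<forall>k j. k \<notin> I \<longrightarrow> H'$k$j = 0"
      proof (intro allI impI)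
        fix k j assume k: "k \<notin> I"
        show "H'$k$j = 0"
        proof (cases "k = i")
          case True
          then show ?thesis using cpos by (simp add: H'_def outer_def h_def c_def)
        next
          case False
          then have "H$k$j = 0" "H$i$k = 0" using HH k sym_entry[OF sym, of i k] by auto
          then show ?thesis by (simp add: H'_def outer_def h_def)
        qed
      qed
      have "0 \<le> C \<bullet> H'" using insert(3) psdH' zero' by blast
      moreover have "0 \<le> C \<bullet> outer h" using C by (simp add: outer_inner psd_def)
      moreover have "C \<bullet> H = C \<bullet> H' + (1/c) * (C \<bullet> outer h)"
        by (simp add: H'_def inner_diff_right)
      ultimately show ?thesis using cpos by simp
    qed
  qed
qed

lemma psd_inner_nonneg: "psd C \<Longrightarrow> psd (H::real^'n^'n) \<Longrightarrow> 0 \<le> C \<bullet> H"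
  using psd_inner_aux[of C UNIV] by simp



lemma box_mat: "{a::real^'n^'m..b} = cbox a b"
  by (auto simp add: less_eq_vec_def mem_box Basis_vec_def inner_axis)

lemma closed_S2: "closed {(X::real^'n^'n, r::real). (\<forall>i j. X$i$j = X$j$i) \<and> (\<forall>x. x \<bullet> (X *v x) \<le> 0) \<and> r \<le> 0}"
proof -
  have eq: "{(X::real^'n^'n, r::real). (\<forall>i j. X$i$j = X$j$i) \<and> (\<forall>x. x \<bullet> (X *v x) \<le> 0) \<and> r \<le> 0}
    = {p. (\<forall>i. \<forall>j. fst p $i$j = fst p $j$i) \<and> (\<forall>x. (\<Sum>i\<in>UNIV. \<Sum>j\<in>UNIV. x$i * fst p$i$j * x$j) \<le> 0) \<and> snd p \<le> 0}"
    by (auto simp: quad_form)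
  show ?thesis unfolding eq
    by (intro closed_Collect_conj closed_Collect_all closed_Collect_eq closed_Collect_le
        continuous_intros continuous_on_component)
qed

definition cstar :: "real^'n^'n \<Rightarrow> real^'n^'n \<Rightarrow> real^'n^'n \<Rightarrow> real^'n^'n" where
  "cstar Cmin Cmax M = (\<chi> i j. if 0 \<le> M$i$j then Cmax$i$j else Cmin$i$j)"

definition posp :: "real^'n^'n \<Rightarrow> real^'n^'n" where
  "posp M = (\<chi> i j. max (M$i$j) 0)"

definition negp :: "real^'n^'n \<Rightarrow> real^'n^'n" where
  "negp M = (\<chi> i j. max (- M$i$j) 0)"

lemma cstar_box: "Cmin \<le> Cmax \<Longrightarrow> Cmin \<le> cstar Cmin Cmax M \<and> cstar Cmin Cmax M \<le> Cmax"
  by (auto simp: cstar_def less_eq_vec_def)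

lemma cstar_sym:
  assumes "transpose Cmin = Cmin" "transpose Cmax = Cmax" "transpose M = M"
  shows "transpose (cstar Cmin Cmax M) = cstar Cmin Cmax M"
  using sym_entry[OF assms(1)] sym_entry[OF assms(2)] sym_entry[OF assms(3)]
  by (simp add: cstar_def transpose_def vec_eq_iff)

lemma sigma_eq: "- (Cmin \<bullet> negp M) + Cmax \<bullet> posp M = cstar Cmin Cmax M \<bullet> M"
  unfolding inner_mat sum_negf[symmetric] sum.distrib[symmetric]
  by (intro sum.cong refl) (simp add: cstar_def posp_def negp_def max_def)

lemma posp_negp: "posp M - negp M = M"
  by (simp add: posp_def negp_def vec_eq_iff max_def)

lemma posp_nonneg: "0 \<le> posp M" and negp_nonneg: "0 \<le> negp M"
  by (auto simp: posp_def negp_def less_eq_vec_def)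

lemma transpose_inner_sym:
  assumes "transpose S = S"
  shows "transpose M \<bullet> S = (M::real^'n^'n) \<bullet> S"
proof -
  have "transpose M \<bullet> S = (\<Sum>i\<in>UNIV. \<Sum>j\<in>UNIV. M$j$i * S$j$i)"
    unfolding inner_mat using sym_entry[OF assms] by (simp add: transpose_def)
  also have "\<dots> = M \<bullet> S" unfolding inner_mat by (rule sum.swap)
  finally show ?thesis .
qed

lemma psd_scale: "psd H \<Longrightarrow> 0 \<le> t \<Longrightarrow> psd (t *\<^sub>R H)"
  unfolding psd_def
  by (simp add: transpose_scalar scaleR_matrix_vector_assoc[symmetric])

lemma lin_bound:
  assumes "\<forall>t\<ge>0. (b::real) < K - t * c"
  shows "c \<le> 0"
proof (rule ccontr)
  assume "\<not> c \<le> 0"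
  then have c: "c > 0" by simp
  have "b < K" using assms[rule_format, of 0] by simp
  then have "0 \<le> (K - b) / c" using c by simp
  then have "b < K - ((K - b) / c) * c" using assms by blast
  then show False using c by simp
qed

lemma box_bound:
  fixes C Cmin Cmax T :: "real^'n^'n"
  assumes "Cmin \<le> C" "C \<le> Cmax"
  shows "C \<bullet> T \<le> (\<Sum>i\<in>UNIV. \<Sum>j\<in>UNIV. (\<bar>Cmin$i$j\<bar> + \<bar>Cmax$i$j\<bar>) * \<bar>T$i$j\<bar>)"
  unfolding inner_mat
proof (intro sum_mono)
  fix i j
  have a: "Cmin$i$j \<le> C$i$j" "C$i$j \<le> Cmax$i$j" using assms by (auto simp: less_eq_vec_def)
  have "C$i$j * T$i$j \<le> \<bar>C$i$j\<bar> * \<bar>T$i$j\<bar>" by (metis abs_ge_self abs_mult)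
  also have "\<dots> \<le> (\<bar>Cmin$i$j\<bar> + \<bar>Cmax$i$j\<bar>) * \<bar>T$i$j\<bar>"
    using a by (intro mult_right_mono) auto
  finally show "C$i$j * T$i$j \<le> (\<bar>Cmin$i$j\<bar> + \<bar>Cmax$i$j\<bar>) * \<bar>T$i$j\<bar>" .
qed

lemma transpose_plus: "transpose (A + B) = transpose A + transpose (B::real^'n^'n)"
  by (simp add: transpose_def vec_eq_iff)

lemma neg_mv: "(- M) *v z = - ((M::real^'n^'m) *v z)"
  by (simp add: matrix_vector_mult_def vec_eq_iff sum_negf)

lemma key:
  fixes Cmin Cmax T :: "real^'n^'n" and y :: real
  assumes sCmin: "transpose Cmin = Cmin" and sCmax: "transpose Cmax = Cmax"
    and le: "Cmin \<le> Cmax" and sT: "transpose T = T"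
    and hyp: "\<forall>C. Cmin \<le> C \<and> C \<le> Cmax \<and> psd C \<longrightarrow> C \<bullet> T < y"
  shows "\<exists>H. psd H \<and> cstar Cmin Cmax (T + H) \<bullet> (T + H) < y"
proof -
  define Box where "Box = {C. Cmin \<le> C \<and> C \<le> Cmax}"
  define S1 where "S1 = (\<lambda>C. (C, C \<bullet> T)) ` Box"
  define S2 where "S2 = {(X::real^'n^'n, r::real). (\<forall>i j. X$i$j = X$j$i) \<and> (\<forall>x. x \<bullet> (X *v x) \<le> 0) \<and> r \<le> 0}"
  define W where "W = (\<Union>a\<in>S1. \<Union>b\<in>S2. {a + b})"
  have BoxI: "Box = cbox Cmin Cmax" unfolding Box_def box_mat[symmetric] by auto
  have cS1: "compact S1" unfolding S1_def BoxI
    by (intro compact_continuous_image continuous_intros compact_cbox)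
  have clS2: "closed S2" unfolding S2_def by (rule closed_S2)
  have cvS1: "convex S1" unfolding S1_def BoxI
    by (intro convex_linear_image convex_box) (auto intro!: linearI simp: inner_add_left)
  have cvS2: "convex S2" unfolding S2_def convex_def
    by (auto simp: matrix_vector_mult_add_rdistrib scaleR_matrix_vector_assoc[symmetric]
        inner_add_right intro!: add_nonpos_nonpos mult_nonneg_nonpos)
  have clW: "closed W" unfolding W_def by (rule compact_closed_sums[OF cS1 clS2])
  have cvW: "convex W" unfolding W_def by (rule convex_sums[OF cvS1 cvS2])
  have memW: "(C + X, C \<bullet> T + r) \<in> W" if "C \<in> Box" "(X, r) \<in> S2" for C X r
    unfolding W_def S1_def using that by force
  have notin: "(0, y) \<notin> W"
  proof
    assume "(0, y) \<in> W"
    then obtain C X r where C: "C \<in> Box" and Xr: "(X, r) \<in> S2" and eq: "(0, y) = (C + X, C \<bullet> T + r)"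
      unfolding W_def S1_def by auto
    have X: "X = - C" using eq by (simp add: eq_neg_iff_add_eq_0 add.commute)
    have "transpose C = C" using Xr X unfolding S2_def
      by (auto simp: transpose_def vec_eq_iff)
    moreover have "0 \<le> x \<bullet> (C *v x)" for x
    proof -
      have "x \<bullet> (X *v x) \<le> 0" using Xr unfolding S2_def by auto
      moreover have "X *v x = - (C *v x)" unfolding X
        by (simp add: matrix_vector_mult_def vec_eq_iff sum_negf)
      ultimately show ?thesis by simp
    qed
    ultimately have "psd C" unfolding psd_def by blast
    then have "C \<bullet> T < y" using hyp C unfolding Box_def by blast
    moreover have "r \<le> 0" using Xr unfolding S2_def by auto
    ultimately show False using eq by simp
  qed
  obtain a beta where ab1: "inner a (0, y) < beta" and ab2: "\<forall>w\<in>W. beta < inner a w"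
    using separating_hyperplane_closed_point[OF cvW clW notin] by blast
  obtain a1 a2 where a: "a = (a1, a2)" by (cases a)
  have CminB: "Cmin \<in> Box" unfolding Box_def using le by simp
  have S2_0: "(0, -s) \<in> S2" if "s \<ge> 0" for s using that unfolding S2_def by simp
  have "\<forall>s\<ge>0. beta < (a1 \<bullet> Cmin + a2 * (Cmin \<bullet> T)) - s * a2"
  proof (intro allI impI)
    fix s :: real assume "s \<ge> 0"
    then have "beta < inner a (Cmin + 0, Cmin \<bullet> T + - s)" using ab2 memW[OF CminB S2_0] by blast
    then show "beta < (a1 \<bullet> Cmin + a2 * (Cmin \<bullet> T)) - s * a2" by (simp add: a algebra_simps)
  qed
  then have a2: "a2 \<le> 0" by (rule lin_bound)
  have a1o: "a1 \<bullet> outer x \<le> 0" for x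
  proof -
    have "\<forall>t\<ge>0. beta < (a1 \<bullet> Cmin + a2 * (Cmin \<bullet> T)) - t * (a1 \<bullet> outer x)"
    proof (intro allI impI)
      fix t :: real assume t: "t \<ge> 0"
      have "z \<bullet> ((- (t *\<^sub>R outer x)) *v z) = - (t * (x \<bullet> z)^2)" for z
        by (simp add: neg_mv scaleR_matrix_vector_assoc[symmetric] outer_quad)
      then have "(- (t *\<^sub>R outer x), 0) \<in> S2" unfolding S2_def
        using t by (auto simp: outer_def mult.commute)
      then have "beta < inner a (Cmin + - (t *\<^sub>R outer x), Cmin \<bullet> T + 0)"
        using ab2 memW[OF CminB] by blast
      then show "beta < (a1 \<bullet> Cmin + a2 * (Cmin \<bullet> T)) - t * (a1 \<bullet> outer x)"
        by (simp add: a algebra_simps)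
    qed
    then show ?thesis by (rule lin_bound)
  qed
  define H where "H = (- 1/2) *\<^sub>R (a1 + transpose a1)"
  have symH: "transpose H = H" unfolding H_def
    by (simp add: transpose_def vec_eq_iff)
  have HS: "H \<bullet> S = - (a1 \<bullet> S)" if "transpose S = S" for S
    unfolding H_def using transpose_inner_sym[OF that, of a1]
    by (simp add: inner_add_left)
  have psdH: "psd H" unfolding psd_def
    using symH HS[OF transpose_outer] a1o outer_inner[of H] by simp
  have mu: "beta < - (H \<bullet> C) + a2 * (C \<bullet> T)" if "C \<in> Box" "transpose C = C" for C
  proof -
    have "(0::real^'n^'n, 0::real) \<in> S2" unfolding S2_def by simp
    then have "beta < inner a (C + 0, C \<bullet> T + 0)" using ab2 memW[OF that(1)] by blast
    then show ?thesis using HS[OF that(2)] by (simp add: a)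
  qed
  have ya: "a2 * y < beta" using ab1 by (simp add: a)
  have cB: "cstar Cmin Cmax M \<in> Box" for M unfolding Box_def using cstar_box[OF le] by blast
  have cS: "transpose (cstar Cmin Cmax M) = cstar Cmin Cmax M" if "transpose M = M" for M
    using cstar_sym[OF sCmin sCmax that] .
  show ?thesis
  proof (cases "a2 < 0")
    case True
    define H' where "H' = (- 1 / a2) *\<^sub>R H"
    have psdH': "psd H'" unfolding H'_def using True by (intro psd_scale psdH) simp
    define C where "C = cstar Cmin Cmax (T + H')"
    have "transpose (T + H') = T + H'" using sT psdH' unfolding psd_def by (simp add: transpose_plus)
    then have "beta < - (H \<bullet> C) + a2 * (C \<bullet> T)" using mu cB cS C_def by blast
    then have "- (H \<bullet> C) + a2 * (C \<bullet> T) > a2 * y" using ya by linarith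
    then have "(- 1 / a2) * (a2 * y) < (- 1 / a2) * (- (H \<bullet> C) + a2 * (C \<bullet> T))"
      using True by (intro mult_strict_left_mono) auto
    moreover have "(- 1 / a2) * (a2 * y) = - y" using True by simp
    moreover have "(- 1 / a2) * (- (H \<bullet> C) + a2 * (C \<bullet> T)) = (H \<bullet> C) / a2 - C \<bullet> T"
      using True by (simp add: field_simps)
    moreover have "C \<bullet> (T + H') = C \<bullet> T - (H \<bullet> C) / a2"
      unfolding H'_def by (simp add: inner_add_right inner_diff_right inner_commute)
    ultimately have "C \<bullet> (T + H') < y" by linarith
    then show ?thesis using psdH' C_def by blast
  next
    case False
    then have a20: "a2 = 0" using a2 by simp
    then have bpos: "beta > 0" using ya by simp
    define K0 where "K0 = (\<Sum>i\<in>UNIV. \<Sum>j\<in>UNIV. (\<bar>Cmin$i$j\<bar> + \<bar>Cmax$i$j\<bar>) * \<bar>T$i$j\<bar>)"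
    define t where "t = \<bar>K0 - y\<bar> / beta + 1"
    have tpos: "t > 0" unfolding t_def using bpos by (simp add: add_nonneg_pos)
    define H' where "H' = t *\<^sub>R H"
    have psdH': "psd H'" unfolding H'_def using tpos by (intro psd_scale psdH) simp
    define C where "C = cstar Cmin Cmax (T + H')"
    have "transpose (T + H') = T + H'" using sT psdH' unfolding psd_def by (simp add: transpose_plus)
    then have C1: "beta < - (H \<bullet> C)" using mu cB cS C_def a20 by fastforce
    have C2: "C \<bullet> T \<le> K0" unfolding K0_def using cB[of "T + H'"] box_bound unfolding Box_def C_def
      by blast
    have "C \<bullet> (T + H') = C \<bullet> T + t * (H \<bullet> C)"
      by (simp add: H'_def inner_add_right inner_commute)
    also have "\<dots> < K0 - t * beta"
    proof -
      have "t * beta < t * (- (H \<bullet> C))" using C1 tpos by (rule mult_strict_left_mono)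
      then show ?thesis using C2 by simp
    qed
    also have "K0 - t * beta = K0 - \<bar>K0 - y\<bar> - beta" unfolding t_def using bpos
      by (simp add: field_simps)
    also have "\<dots> < y" using bpos by linarith
    finally show ?thesis using psdH' C_def by blast
  qed
qed



lemma mono_inner_mat: "0 \<le> A \<Longrightarrow> X \<le> Y \<Longrightarrow> (X::real^'n^'n) \<bullet> A \<le> Y \<bullet> A"
  unfolding inner_mat by (intro sum_mono) (auto simp: less_eq_vec_def intro: mult_right_mono)

lemma mono_inner_vec: "0 \<le> a \<Longrightarrow> x \<le> y \<Longrightarrow> (x::real^'n) \<bullet> a \<le> y \<bullet> a"
  unfolding inner_vec_def by (intro sum_mono) (auto simp: less_eq_vec_def intro: mult_right_mono)

lemma weak:
  assumes "Cmin \<le> C" "C \<le> Cmax" "bmin \<le> b" "b \<le> bmax" "psd C" "dual_feas th A B d e H"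
  shows "primal_obj lam th C b \<le> dual_obj lam Cmin Cmax bmin bmax th A B d e"
proof -
  have f: "- outer th - A + B - H = 0" "2 *\<^sub>R th - d + e = 0" "0 \<le> A" "0 \<le> B" "0 \<le> d" "0 \<le> e" "psd H"
    using assms(6) unfolding dual_feas_def by auto
  have E1: "outer th = B - A - H" using f(1) by (simp add: algebra_simps eq_neg_iff_add_eq_0)
  have E2: "2 *\<^sub>R th = d - e" using f(2) by (simp add: algebra_simps)
  have q: "th \<bullet> (C *v th) = C \<bullet> B - C \<bullet> A - C \<bullet> H"
    using outer_inner[of C th] E1 by (simp add: inner_diff_right)
  have l: "2 * (b \<bullet> th) = b \<bullet> d - b \<bullet> e"
  proof -
    have "2 * (b \<bullet> th) = b \<bullet> (2 *\<^sub>R th)" by simp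
    then show ?thesis using E2 by (simp add: inner_diff_right)
  qed
  have i1: "C \<bullet> B \<le> Cmax \<bullet> B" using mono_inner_mat[OF f(4) assms(2)] .
  have i2: "Cmin \<bullet> A \<le> C \<bullet> A" using mono_inner_mat[OF f(3) assms(1)] .
  have i3: "0 \<le> C \<bullet> H" using psd_inner_nonneg[OF assms(5) f(7)] .
  have i4: "bmin \<bullet> d \<le> b \<bullet> d" using mono_inner_vec[OF f(5) assms(3)] .
  have i5: "b \<bullet> e \<le> bmax \<bullet> e" using mono_inner_vec[OF f(6) assms(4)] .
  show ?thesis unfolding primal_obj_def dual_obj_def using q l i1 i2 i3 i4 i5
    by linarith
qed

definition dvec :: "real^'n \<Rightarrow> real^'n" where "dvec th = (\<chi> i. max (2 * th$i) 0)"
definition evec :: "real^'n \<Rightarrow> real^'n" where "evec th = (\<chi> i. max (- (2 * th$i)) 0)"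
definition bstar :: "real^'n \<Rightarrow> real^'n \<Rightarrow> real^'n \<Rightarrow> real^'n" where
  "bstar bmin bmax th = (\<chi> i. if 0 \<le> th$i then bmin$i else bmax$i)"

lemma de_eq: "2 *\<^sub>R th - dvec th + evec th = 0"
  by (simp add: dvec_def evec_def vec_eq_iff max_def)

lemma de_nonneg: "0 \<le> dvec th" "0 \<le> evec th"
  by (auto simp: dvec_def evec_def less_eq_vec_def)

lemma de_val: "- (bmin \<bullet> dvec th) + bmax \<bullet> evec th = - 2 * (bstar bmin bmax th \<bullet> th)"
  unfolding inner_vec_def sum_negf[symmetric] sum.distrib[symmetric] sum_distrib_left
  by (intro sum.cong refl) (simp add: dvec_def evec_def bstar_def max_def)

lemma bstar_box: "bmin \<le> bmax \<Longrightarrow> bmin \<le> bstar bmin bmax th \<and> bstar bmin bmax th \<le> bmax"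
  by (auto simp: bstar_def less_eq_vec_def)



lemma per_theta:
  fixes lam :: real and Cmin Cmax :: "real^'n^'n" and bmin bmax th :: "real^'n"
  assumes "transpose Cmin = Cmin" and "transpose Cmax = Cmax" and le: "Cmin \<le> Cmax"
    and ble: "bmin \<le> bmax"
  shows "(SUP p\<in>primal_feas Cmin Cmax bmin bmax. ereal (primal_obj lam th (fst p) (snd p)))
          = (INF q\<in>{(A, B, d, e, H). dual_feas th A B d e H}.
               ereal (case q of (A, B, d, e, H) \<Rightarrow> dual_obj lam Cmin Cmax bmin bmax th A B d e))"
    (is "?P = ?D")
proof (rule antisym)
  show "?P \<le> ?D"
  proof (intro SUP_least INF_greatest)
    fix p q
    assume p: "p \<in> primal_feas Cmin Cmax bmin bmax" and q: "q \<in> {(A, B, d, e, H). dual_feas th A B d e H}"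
    obtain C b where pp: "p = (C, b)" by (cases p)
    obtain A B d e H where qq: "q = (A, B, d, e, H)" by (cases q)
    show "ereal (primal_obj lam th (fst p) (snd p))
      \<le> ereal (case q of (A, B, d, e, H) \<Rightarrow> dual_obj lam Cmin Cmax bmin bmax th A B d e)"
      using p q weak[of Cmin C Cmax bmin b bmax th A B d e H lam]
      unfolding pp qq primal_feas_def by auto
  qed
next
  show "?D \<le> ?P"
  proof (rule ccontr)
    assume "\<not> ?D \<le> ?P"
    then have "?P < ?D" by simp
    then obtain z where z1: "?P < ereal z" and z2: "ereal z < ?D" using ereal_dense2 by blast
    define bs where "bs = bstar bmin bmax th"
    have bsb: "bmin \<le> bs" "bs \<le> bmax" using bstar_box[OF ble] bs_def by auto
    define y where "y = z + 2 * (bs \<bullet> th) - lam * (norm th)^2"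
    have hyp: "\<forall>C. Cmin \<le> C \<and> C \<le> Cmax \<and> psd C \<longrightarrow> C \<bullet> outer th < y"
    proof (intro allI impI)
      fix C assume C: "Cmin \<le> C \<and> C \<le> Cmax \<and> psd C"
      then have "(C, bs) \<in> primal_feas Cmin Cmax bmin bmax" using bsb unfolding primal_feas_def by auto
      then have "ereal (primal_obj lam th C bs) \<le> ?P"
        by (metis (no_types, lifting) SUP_upper fst_conv snd_conv)
      then have "ereal (primal_obj lam th C bs) < ereal z" using z1 by (rule order.strict_trans1)
      then have "primal_obj lam th C bs < z" by simp
      then show "C \<bullet> outer th < y" unfolding y_def primal_obj_def by (simp add: outer_inner)
    qed
    obtain H where H: "psd H" and Hy: "cstar Cmin Cmax (outer th + H) \<bullet> (outer th + H) < y"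
      using key[OF assms(1,2) le transpose_outer hyp] by blast
    define M where "M = outer th + H"
    have "- outer th - negp M + posp M - H = (posp M - negp M) - M"
      by (simp add: M_def algebra_simps)
    then have e1: "- outer th - negp M + posp M - H = 0" by (simp add: posp_negp)
    have feas: "dual_feas th (negp M) (posp M) (dvec th) (evec th) H"
      unfolding dual_feas_def using H e1 de_eq de_nonneg posp_nonneg negp_nonneg
      by blast
    have "dual_obj lam Cmin Cmax bmin bmax th (negp M) (posp M) (dvec th) (evec th)
       = - 2 * (bs \<bullet> th) + cstar Cmin Cmax M \<bullet> M + lam * (norm th)^2"
      unfolding dual_obj_def using de_val[of bmin th bmax] sigma_eq[of Cmin M Cmax] bs_def
      by simp
    also have "\<dots> < z" using Hy unfolding y_def M_def by simp
    finally have lt: "dual_obj lam Cmin Cmax bmin bmax th (negp M) (posp M) (dvec th) (evec th) < z" .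
    have "?D \<le> ereal (dual_obj lam Cmin Cmax bmin bmax th (negp M) (posp M) (dvec th) (evec th))"
      by (rule INF_lower2[of "(negp M, posp M, dvec th, evec th, H)"]) (use feas in auto)
    moreover have "ereal (dual_obj lam Cmin Cmax bmin bmax th (negp M) (posp M) (dvec th) (evec th)) < ereal z"
      using lt by simp
    ultimately have "?D < ereal z" by (rule order.strict_trans1)
    then show False using z2 by simp
  qed
qed

lemma INF_split:
  "(INF th. INF q\<in>{(A, B, d, e, H). R th A B d e H}. ereal (case q of (A, B, d, e, H) \<Rightarrow> g th A B d e))
   = (INF q\<in>{(th, A, B, d, e, H). R th A B d e H}. ereal (case q of (th, A, B, d, e, H) \<Rightarrow> g th A B d e))"
  (is "?L = ?R")
proof (rule antisym)
  show "?L \<le> ?R"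
  proof (rule INF_greatest)
    fix q assume "q \<in> {(th, A, B, d, e, H). R th A B d e H}"
    then obtain th A B d e H where q: "q = (th, A, B, d, e, H)" "R th A B d e H" by auto
    have "?L \<le> (INF q\<in>{(A, B, d, e, H). R th A B d e H}. ereal (case q of (A, B, d, e, H) \<Rightarrow> g th A B d e))"
      by (rule INF_lower) simp
    also have "\<dots> \<le> ereal (g th A B d e)"
      by (rule INF_lower2[of "(A, B, d, e, H)"]) (use q in auto)
    finally show "?L \<le> ereal (case q of (th, A, B, d, e, H) \<Rightarrow> g th A B d e)" using q by simp
  qed
next
  show "?R \<le> ?L"
  proof (intro INF_greatest)
    fix th q assume "q \<in> {(A, B, d, e, H). R th A B d e H}"
    then obtain A B d e H where q: "q = (A, B, d, e, H)" "R th A B d e H" by auto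
    have "?R \<le> ereal (g th A B d e)"
      by (rule INF_lower2[of "(th, A, B, d, e, H)"]) (use q in auto)
    then show "?R \<le> ereal (case q of (A, B, d, e, H) \<Rightarrow> g th A B d e)" using q by simp
  qed
qed

theorem theorem3:
  fixes lam :: real
    and Cmin Cmax :: "real^'n^'n"
    and bmin bmax :: "real^'n"
  assumes "lam > 0"
    and "transpose Cmin = Cmin" and "transpose Cmax = Cmax" and "Cmin \<le> Cmax"
    and "bmin \<le> bmax"
  shows "(\<forall>th :: real^'n.
            (SUP p\<in>primal_feas Cmin Cmax bmin bmax. ereal (primal_obj lam th (fst p) (snd p)))
          = (INF q\<in>{(A, B, d, e, H). dual_feas th A B d e H}.
               ereal (case q of (A, B, d, e, H) \<Rightarrow> dual_obj lam Cmin Cmax bmin bmax th A B d e)))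
       \<and> (INF th :: real^'n. SUP p\<in>primal_feas Cmin Cmax bmin bmax.
              ereal (primal_obj lam th (fst p) (snd p)))
         = (INF q\<in>{(th, A, B, d, e, H). dual_feas th A B d e H}.
              ereal (case q of (th, A, B, d, e, H) \<Rightarrow> dual_obj lam Cmin Cmax bmin bmax th A B d e))"
proof -
  have 1: "\<forall>th :: real^'n.
            (SUP p\<in>primal_feas Cmin Cmax bmin bmax. ereal (primal_obj lam th (fst p) (snd p)))
          = (INF q\<in>{(A, B, d, e, H). dual_feas th A B d e H}.
               ereal (case q of (A, B, d, e, H) \<Rightarrow> dual_obj lam Cmin Cmax bmin bmax th A B d e))"
    using per_theta[OF assms(2-5)] by blast
  then have "(INF th :: real^'n. SUP p\<in>primal_feas Cmin Cmax bmin bmax.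
              ereal (primal_obj lam th (fst p) (snd p)))
     = (INF th :: real^'n. INF q\<in>{(A, B, d, e, H). dual_feas th A B d e H}.
               ereal (case q of (A, B, d, e, H) \<Rightarrow> dual_obj lam Cmin Cmax bmin bmax th A B d e))"
    by simp
  also have "\<dots> = (INF q\<in>{(th, A, B, d, e, H). dual_feas th A B d e H}.
              ereal (case q of (th, A, B, d, e, H) \<Rightarrow> dual_obj lam Cmin Cmax bmin bmax th A B d e))"
    by (rule INF_split)
  finally show ?thesis using 1 by blast
qed

end
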